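(* Let $M\subset\mathbb{R}^{2d}$ be a smooth closed hypersurface bounding a quadratically convex domain containing the origin in its interior. For every point $x$ in the exterior of $M$ there exists a unique point $n_-(x)\in M$ with $R(n_-(x))\sim -x$, and a unique point $n_+(x)\in M$ with $R(n_+(x))\sim x$. Explicitly, in terms of the outward unit normal Gauss map $G:M\to S^{2d-1}$, $$n_+(x)=G^{-1}\Big(-\frac{Jx}{|x|}\Big),\qquad n_-(x)=G^{-1}\Big(\frac{Jx}{|x|}\Big).$$
   Context: $\mathbb{R}^{2d}$ carries its standard inner product, norm $|\cdot|$, complex structure $J$ (orthogonal, $J^2=-I$) and symplectic form $\omega(u,v)=\langle Ju,v\rangle$. For $q\in M$ the Reeb vector $R(q)$ is the unique vector with $\omega(v,R(q))=0$ for all $v\in T_qM$ and $\omega(q,R(q))=1$. The notation $a\sim b$ means $a=\lambda b$ for some $\lambda>0$. The Gauss map $G$ sends $q\in M$ to the outward unit normal of $M$ at $q$; it is a diffeomorphism under the convexity assumption. *)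

theory Defs
  imports "HOL-Analysis.Analysis"
begin

text \<open>D k hs x is the k-th
  derivative at x applied to the directions in hs (length k).\<close>
definition smooth_fun :: "('a::euclidean_space \<Rightarrow> real) \<Rightarrow> bool" where
  "smooth_fun F \<longleftrightarrow>
     (\<exists>D :: nat \<Rightarrow> 'a list \<Rightarrow> 'a \<Rightarrow> real.
        (\<forall>x. D 0 [] x = F x) \<and>
        (\<forall>k hs x. length hs = k \<longrightarrow>
            ((D k hs) has_derivative (\<lambda>h. D (Suc k) (h # hs) x)) (at x)))"

definition grad :: "('a::euclidean_space \<Rightarrow> real) \<Rightarrow> 'a \<Rightarrow> 'a" where
  "grad F q = (\<Sum>b\<in>Basis. frechet_derivative F (at q) b *\<^sub>R b)"

definition hess :: "('a::euclidean_space \<Rightarrow> real) \<Rightarrow> 'a \<Rightarrow> 'a \<Rightarrow> 'a" where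
  "hess F q = frechet_derivative (grad F) (at q)"

definition complex_structure :: "('a::euclidean_space \<Rightarrow> 'a) \<Rightarrow> bool" where
  "complex_structure J \<longleftrightarrow> linear J \<and> (\<forall>u v. J u \<bullet> J v = u \<bullet> v) \<and> (\<forall>u. J (J u) = - u)"

definition omega :: "('a::euclidean_space \<Rightarrow> 'a) \<Rightarrow> 'a \<Rightarrow> 'a \<Rightarrow> real" where
  "omega J u v = J u \<bullet> v"

definition hsurf :: "('a::euclidean_space \<Rightarrow> real) \<Rightarrow> 'a set" where
  "hsurf F = {q. F q = 0}"

definition tangent_space :: "('a::euclidean_space \<Rightarrow> real) \<Rightarrow> 'a \<Rightarrow> 'a set" where
  "tangent_space F q = {v. v \<bullet> grad F q = 0}"

text \<open>Smooth closed hypersurface M = {F = 0} (regular level set) bounding the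
  compact convex domain {F \<le> 0}, which is quadratically convex (second
  fundamental form positive definite) and contains 0 in its interior.\<close>
definition quad_convex_hypersurface :: "('a::euclidean_space \<Rightarrow> real) \<Rightarrow> bool" where
  "quad_convex_hypersurface F \<longleftrightarrow>
     smooth_fun F \<and>
     bounded {x. F x \<le> 0} \<and> convex {x. F x \<le> 0} \<and>
     F 0 < 0 \<and>
     (\<forall>q\<in>hsurf F. grad F q \<noteq> 0) \<and>
     (\<forall>q\<in>hsurf F. \<forall>v\<in>tangent_space F q. v \<noteq> 0 \<longrightarrow> hess F q v \<bullet> v > 0)"

definition gauss :: "('a::euclidean_space \<Rightarrow> real) \<Rightarrow> 'a \<Rightarrow> 'a" where
  "gauss F q = (1 / norm (grad F q)) *\<^sub>R grad F q"

definition reeb :: "('a::euclidean_space \<Rightarrow> 'a) \<Rightarrow> ('a \<Rightarrow> real) \<Rightarrow> 'a \<Rightarrow> 'a" where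
  "reeb J F q = (THE r. (\<forall>v\<in>tangent_space F q. omega J v r = 0) \<and> omega J q r = 1)"

definition pos_sim :: "'a::real_vector \<Rightarrow> 'a \<Rightarrow> bool" where
  "pos_sim a b \<longleftrightarrow> (\<exists>c>0. a = c *\<^sub>R b)"

end

theory Submission
  imports Defs
begin

lemma linear_grad_repr:
  fixes L :: "'a::euclidean_space \<Rightarrow> real"
  assumes "linear L"
  shows "(\<Sum>b\<in>Basis. L b *\<^sub>R b) \<bullet> h = L h"
proof -
  have "(\<Sum>b\<in>Basis. L b *\<^sub>R b) \<bullet> h = (\<Sum>b\<in>Basis. L b * (b \<bullet> h))"
    by (simp add: inner_sum_left)
  also have "\<dots> = (\<Sum>b\<in>Basis. (h \<bullet> b) * L b)"
    by (rule sum.cong) (simp_all add: inner_commute)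
  also have "\<dots> = L (\<Sum>b\<in>Basis. (h \<bullet> b) *\<^sub>R b)"
    using assms by (simp add: linear_sum linear_scale)
  also have "\<dots> = L h" by (simp add: euclidean_representation)
  finally show ?thesis .
qed

lemma smooth_derivs:
  fixes F :: "'a::euclidean_space \<Rightarrow> real"
  assumes "smooth_fun F"
  shows "(F has_derivative (\<lambda>h. grad F x \<bullet> h)) (at x)"
    and "(grad F has_derivative hess F x) (at x)"
proof -
  obtain D :: "nat \<Rightarrow> 'a list \<Rightarrow> 'a \<Rightarrow> real" where D0: "\<And>x. D 0 [] x = F x"
    and DS: "\<And>k hs x. length hs = k \<Longrightarrow> ((D k hs) has_derivative (\<lambda>h. D (Suc k) (h # hs) x)) (at x)"
    using assms unfolding smooth_fun_def by blast
  have FD: "(F has_derivative (\<lambda>h. D 1 [h] x)) (at x)" for x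
  proof -
    have "D 0 [] = F" using D0 by auto
    then show ?thesis using DS[of "[]" 0 x] by simp
  qed
  have fd: "frechet_derivative F (at x) = (\<lambda>h. D 1 [h] x)" for x
    using frechet_derivative_at[OF FD[of x]] by simp
  have gr: "grad F = (\<lambda>x. \<Sum>b\<in>Basis. D 1 [b] x *\<^sub>R b)"
    by (rule ext) (simp add: grad_def fd)
  have lin: "linear (\<lambda>h. D 1 [h] x)" for x
    using FD[of x] has_derivative_linear by blast
  have "(\<lambda>h. grad F x \<bullet> h) = (\<lambda>h. D 1 [h] x)"
    by (rule ext) (simp only: gr linear_grad_repr[OF lin])
  then show "(F has_derivative (\<lambda>h. grad F x \<bullet> h)) (at x)"
    using FD[of x] by simp
  have "(grad F has_derivative (\<lambda>h. \<Sum>b\<in>Basis. D 2 [h, b] x *\<^sub>R b)) (at x)"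
    unfolding gr
    by (rule has_derivative_sum, rule has_derivative_scaleR_left)
       (use DS[of "[_]" 1 x] in \<open>simp add: numeral_2_eq_2\<close>)
  note gd = this
  have "hess F x = (\<lambda>h. \<Sum>b\<in>Basis. D 2 [h, b] x *\<^sub>R b)"
    unfolding hess_def using frechet_derivative_at[OF gd] by simp
  then show "(grad F has_derivative hess F x) (at x)" using gd by simp
qed

lemma perp_parallel:
  fixes g w :: "'a::real_inner"
  assumes "g \<noteq> 0" "\<And>v. v \<bullet> g = 0 \<Longrightarrow> v \<bullet> w = 0"
  shows "w = (w \<bullet> g / (g \<bullet> g)) *\<^sub>R g"
proof -
  define c where "c = w \<bullet> g / (g \<bullet> g)"
  define v where "v = w - c *\<^sub>R g"
  have gg: "g \<bullet> g \<noteq> 0" using assms(1) by simp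
  have vg: "v \<bullet> g = 0" using gg by (simp add: v_def c_def inner_diff_left)
  then have "v \<bullet> w = 0" using assms(2) by blast
  then have "v \<bullet> v = 0" using vg by (simp add: v_def inner_diff_right inner_commute)
  then have "v = 0" by simp
  then show ?thesis by (simp add: v_def c_def)
qed

lemma line_deriv:
  fixes F :: "'a::real_inner \<Rightarrow> real"
  assumes "(F has_derivative (\<lambda>h. g \<bullet> h)) (at p)"
  shows "DERIV (\<lambda>t. F (p + t *\<^sub>R v)) 0 :> (g \<bullet> v)"
proof -
  have l: "((\<lambda>t. p + t *\<^sub>R v) has_derivative (\<lambda>t. t *\<^sub>R v)) (at 0)"
    by (auto intro!: derivative_eq_intros)
  have a: "(F has_derivative (\<lambda>h. g \<bullet> h)) (at ((\<lambda>t. p + t *\<^sub>R v) 0))"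
    using assms by simp
  have "((\<lambda>t. F (p + t *\<^sub>R v)) has_derivative (\<lambda>t. g \<bullet> (t *\<^sub>R v))) (at 0)"
    using has_derivative_compose[OF l a] by simp
  moreover have "(\<lambda>t. g \<bullet> (t *\<^sub>R v)) = (*) (g \<bullet> v)"
    by (rule ext) simp
  ultimately show ?thesis by (simp add: has_field_derivative_def)
qed

lemma grad_line_deriv:
  fixes F :: "'a::euclidean_space \<Rightarrow> real"
  assumes "(grad F has_derivative hess F p) (at p)"
  shows "DERIV (\<lambda>t. grad F (p + t *\<^sub>R v) \<bullet> v) 0 :> (hess F p v \<bullet> v)"
proof -
  have l: "((\<lambda>t. p + t *\<^sub>R v) has_derivative (\<lambda>t. t *\<^sub>R v)) (at 0)"
    by (auto intro!: derivative_eq_intros)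
  have a: "(grad F has_derivative hess F p) (at ((\<lambda>t. p + t *\<^sub>R v) 0))"
    using assms by simp
  have "((\<lambda>t. grad F (p + t *\<^sub>R v)) has_derivative (\<lambda>t. hess F p (t *\<^sub>R v))) (at 0)"
    using has_derivative_compose[OF l a] by simp
  then have "((\<lambda>t. grad F (p + t *\<^sub>R v) \<bullet> v) has_derivative (\<lambda>t. hess F p (t *\<^sub>R v) \<bullet> v)) (at 0)"
    by (rule has_derivative_inner_left)
  moreover have "(\<lambda>t. hess F p (t *\<^sub>R v) \<bullet> v) = (*) (hess F p v \<bullet> v)"
  proof
    fix t :: real
    have "linear (hess F p)" using assms has_derivative_linear by blast
    then have "hess F p (t *\<^sub>R v) = t *\<^sub>R hess F p v" by (simp add: linear_scale)
    then show "hess F p (t *\<^sub>R v) \<bullet> v = (hess F p v \<bullet> v) * t" by simp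
  qed
  ultimately show ?thesis by (simp add: has_field_derivative_def)
qed

lemma cont_neg:
  fixes F :: "'a::metric_space \<Rightarrow> real"
  assumes "isCont F q" "F q < 0"
  shows "\<exists>d>0. \<forall>y. dist y q < d \<longrightarrow> F y < 0"
proof -
  from assms(1)[unfolded continuous_at_eps_delta, rule_format, of "- F q"] assms(2)
  obtain d where d: "d > 0" "\<forall>y. dist y q < d \<longrightarrow> dist (F y) (F q) < - F q" by auto
  have "F y < 0" if "dist y q < d" for y
  proof -
    have "\<bar>F y - F q\<bar> < - F q" using d(2) that by (simp add: dist_real_def)
    then show ?thesis by (simp add: abs_less_iff)
  qed
  then show ?thesis using d(1) by blast
qed

lemma qc_facts:
  fixes F :: "'a::euclidean_space \<Rightarrow> real"
  assumes "quad_convex_hypersurface F"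
  shows "\<And>x. (F has_derivative (\<lambda>h. grad F x \<bullet> h)) (at x)"
    and "\<And>x. (grad F has_derivative hess F x) (at x)"
    and "\<And>x. isCont F x"
    and "continuous_on UNIV F"
    and "bounded {x. F x \<le> 0}" and "convex {x. F x \<le> 0}" and "F 0 < 0"
    and "\<And>q. q \<in> hsurf F \<Longrightarrow> grad F q \<noteq> 0"
    and "\<And>q v. q \<in> hsurf F \<Longrightarrow> v \<bullet> grad F q = 0 \<Longrightarrow> v \<noteq> 0 \<Longrightarrow> hess F q v \<bullet> v > 0"
proof -
  have sm: "smooth_fun F" using assms unfolding quad_convex_hypersurface_def by blast
  show d: "\<And>x. (F has_derivative (\<lambda>h. grad F x \<bullet> h)) (at x)"
    by (rule smooth_derivs(1)[OF sm])
  show "\<And>x. (grad F has_derivative hess F x) (at x)"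
    by (rule smooth_derivs(2)[OF sm])
  show c: "\<And>x. isCont F x" using d has_derivative_continuous by blast
  then show "continuous_on UNIV F" by (simp add: continuous_at_imp_continuous_on)
  show "bounded {x. F x \<le> 0}" "convex {x. F x \<le> 0}" "F 0 < 0"
    using assms unfolding quad_convex_hypersurface_def by auto
  show "\<And>q. q \<in> hsurf F \<Longrightarrow> grad F q \<noteq> 0"
    using assms unfolding quad_convex_hypersurface_def by auto
  show "\<And>q v. q \<in> hsurf F \<Longrightarrow> v \<bullet> grad F q = 0 \<Longrightarrow> v \<noteq> 0 \<Longrightarrow> hess F q v \<bullet> v > 0"
    using assms unfolding quad_convex_hypersurface_def tangent_space_def by auto
qed

lemma support:
  fixes F :: "'a::euclidean_space \<Rightarrow> real"
  assumes qc: "quad_convex_hypersurface F" and p: "p \<in> hsurf F" and y: "F y \<le> 0"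
  shows "grad F p \<bullet> (y - p) \<le> 0"
proof (rule ccontr)
  assume "\<not> ?thesis"
  then have pos: "grad F p \<bullet> (y - p) > 0" by simp
  have Fp: "F p = 0" using p by (simp add: hsurf_def)
  from DERIV_pos_inc_right[OF line_deriv[OF qc_facts(1)[OF qc, of p]] pos]
  obtain d where d: "d > 0" "\<And>h. h > 0 \<Longrightarrow> h < d \<Longrightarrow> F (p + 0 *\<^sub>R (y - p)) < F (p + (0 + h) *\<^sub>R (y - p))"
    by blast
  define t where "t = min (d/2) (1/2)"
  have t: "t > 0" "t < d" "t \<le> 1" using d(1) by (auto simp: t_def)
  have "F (p + t *\<^sub>R (y - p)) > 0" using d(2)[OF t(1) t(2)] Fp by simp
  moreover have "(1 - t) *\<^sub>R p + t *\<^sub>R y \<in> {x. F x \<le> 0}"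
    using qc_facts(6)[OF qc] Fp y t unfolding convex_def by auto
  moreover have "(1 - t) *\<^sub>R p + t *\<^sub>R y = p + t *\<^sub>R (y - p)" by (simp add: algebra_simps)
  ultimately show False by simp
qed

lemma inner_pos:
  fixes F :: "'a::euclidean_space \<Rightarrow> real"
  assumes qc: "quad_convex_hypersurface F" and p: "p \<in> hsurf F"
  shows "grad F p \<bullet> p > 0"
proof -
  obtain e where e: "e > 0" "\<And>y. dist y 0 < e \<Longrightarrow> F y < 0"
    using cont_neg[OF qc_facts(3)[OF qc] qc_facts(7)[OF qc]] by blast
  define g where "g = grad F p"
  have g0: "g \<noteq> 0" using qc_facts(8)[OF qc p] by (simp add: g_def)
  define y where "y = (e / 2 / norm g) *\<^sub>R g"
  have "dist y 0 < e" using e(1) g0 by (simp add: y_def)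
  then have "F y \<le> 0" using e(2) by force
  then have "g \<bullet> (y - p) \<le> 0" using support[OF qc p] by (simp add: g_def)
  moreover have "g \<bullet> y = e / 2 * norm g"
    using g0 by (simp add: y_def power2_norm_eq_inner[symmetric] power2_eq_square)
  moreover have "e / 2 * norm g > 0" using e(1) g0 by simp
  ultimately show ?thesis by (simp add: g_def inner_diff_right)
qed

lemma gauss_surj:
  fixes F :: "'a::euclidean_space \<Rightarrow> real"
  assumes qc: "quad_convex_hypersurface F" and u: "norm u = 1"
  shows "\<exists>q\<in>hsurf F. gauss F q = u"
proof -
  define K where "K = {x. F x \<le> 0}"
  have "closed K" unfolding K_def
    by (rule closed_Collect_le) (use qc_facts(4)[OF qc] in \<open>auto intro: continuous_intros\<close>)
  then have "compact K" using qc_facts(5)[OF qc] by (simp add: K_def compact_eq_bounded_closed)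
  moreover have "K \<noteq> {}" using qc_facts(7)[OF qc] by (auto simp: K_def intro!: exI[of _ 0])
  moreover have "continuous_on K (\<lambda>y. u \<bullet> y)" by (intro continuous_intros)
  ultimately obtain q where q: "q \<in> K" "\<And>y. y \<in> K \<Longrightarrow> u \<bullet> y \<le> u \<bullet> q"
    using continuous_attains_sup[of K "\<lambda>y. u \<bullet> y"] by blast
  have Fq: "F q = 0"
  proof (rule ccontr)
    assume "F q \<noteq> 0"
    then have "F q < 0" using q(1) by (simp add: K_def)
    then obtain d where d: "d > 0" "\<And>y. dist y q < d \<Longrightarrow> F y < 0"
      using cont_neg[OF qc_facts(3)[OF qc]] by blast
    have "dist (q + (d/2) *\<^sub>R u) q < d" using d(1) u by (simp add: dist_norm)
    then have "q + (d/2) *\<^sub>R u \<in> K" using d(2) by (force simp: K_def)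
    then have "u \<bullet> (q + (d/2) *\<^sub>R u) \<le> u \<bullet> q" by (rule q(2))
    moreover have "u \<bullet> u = 1" using u by (simp add: power2_norm_eq_inner[symmetric])
    ultimately show False using d(1) by (simp add: inner_add_right)
  qed
  then have qM: "q \<in> hsurf F" by (simp add: hsurf_def)
  define g where "g = grad F q"
  have g0: "g \<noteq> 0" using qc_facts(8)[OF qc qM] by (simp add: g_def)
  have A: "u \<bullet> v \<le> 0" if "g \<bullet> v < 0" for v
  proof -
    from DERIV_neg_dec_right[OF line_deriv[OF qc_facts(1)[OF qc, of q]], of v] that
    obtain d where d: "d > 0" "\<And>h. h > 0 \<Longrightarrow> h < d \<Longrightarrow> F (q + (0 + h) *\<^sub>R v) < F (q + 0 *\<^sub>R v)"
      by (auto simp: g_def)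
    have "F (q + (d/2) *\<^sub>R v) < 0" using d(2)[of "d/2"] d(1) Fq by simp
    then have "u \<bullet> (q + (d/2) *\<^sub>R v) \<le> u \<bullet> q" using q(2) by (simp add: K_def)
    then have "(d/2) * (u \<bullet> v) \<le> 0" by (simp add: inner_add_right)
    then show ?thesis using d(1) by (simp add: mult_le_0_iff)
  qed
  have gg: "g \<bullet> g > 0" using g0 by simp
  have B: "u \<bullet> v \<le> 0" if "g \<bullet> v = 0" for v
  proof (rule ccontr)
    assume "\<not> ?thesis"
    then have uv: "u \<bullet> v > 0" by simp
    show False
    proof (cases "u \<bullet> g \<le> 0")
      case True
      have "g \<bullet> (v - g) < 0" using that gg by (simp add: inner_diff_right)
      then have "u \<bullet> (v - g) \<le> 0" by (rule A)
      then show False using True uv by (simp add: inner_diff_right)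
    next
      case False
      define ep where "ep = (u \<bullet> v) / (2 * (u \<bullet> g))"
      have ep: "ep > 0" using False uv by (simp add: ep_def)
      have "g \<bullet> (v - ep *\<^sub>R g) < 0" using that gg ep by (simp add: inner_diff_right)
      then have "u \<bullet> (v - ep *\<^sub>R g) \<le> 0" by (rule A)
      moreover have "ep * (u \<bullet> g) = (u \<bullet> v) / 2" using False by (simp add: ep_def)
      ultimately show False using uv by (simp add: inner_diff_right)
    qed
  qed
  have C: "v \<bullet> u = 0" if "v \<bullet> g = 0" for v
  proof -
    have "u \<bullet> v \<le> 0" using B[of v] that by (simp add: inner_commute)
    moreover have "u \<bullet> (- v) \<le> 0" using B[of "-v"] that by (simp add: inner_commute)
    ultimately show ?thesis by (simp add: inner_commute)
  qed
  define c where "c = u \<bullet> g / (g \<bullet> g)"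
  have uc: "u = c *\<^sub>R g" using perp_parallel[OF g0 C] by (simp add: c_def)
  have "u \<bullet> g \<ge> 0" using A[of "-g"] gg by simp
  then have "c \<ge> 0" using gg by (simp add: c_def)
  moreover have "c \<noteq> 0" using uc u by auto
  ultimately have cpos: "c > 0" by simp
  have "c * norm g = 1" using u uc cpos by simp
  then have "c = 1 / norm g" using g0 by (simp add: field_simps)
  then have "gauss F q = u" using uc by (simp add: gauss_def g_def)
  then show ?thesis using qM by blast
qed

lemma gauss_inj:
  fixes F :: "'a::euclidean_space \<Rightarrow> real"
  assumes qc: "quad_convex_hypersurface F"
  shows "inj_on (gauss F) (hsurf F)"
proof (rule inj_onI, rule ccontr)
  fix p q assume p: "p \<in> hsurf F" and q: "q \<in> hsurf F" and eq: "gauss F p = gauss F q"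
    and ne: "p \<noteq> q"
  define u where "u = gauss F p"
  define gp where "gp = grad F p"
  define gq where "gq = grad F q"
  have gp0: "gp \<noteq> 0" using qc_facts(8)[OF qc p] by (simp add: gp_def)
  have gq0: "gq \<noteq> 0" using qc_facts(8)[OF qc q] by (simp add: gq_def)
  have gpu: "gp = norm gp *\<^sub>R u" using gp0 by (simp add: u_def gauss_def gp_def)
  have gqu: "gq = norm gq *\<^sub>R u" using gq0 eq by (simp add: u_def gauss_def gq_def)
  have uu: "u \<bullet> u = 1" using gp0
    by (simp add: u_def gauss_def gp_def[symmetric] power2_norm_eq_inner[symmetric] power2_eq_square)
  have Fp: "F p = 0" and Fq: "F q = 0" using p q by (auto simp: hsurf_def)
  define v where "v = q - p"
  have v0: "v \<noteq> 0" using ne by (simp add: v_def)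
  have "gp \<bullet> (q - p) \<le> 0" using support[OF qc p] Fq by (simp add: gp_def)
  moreover have "gp \<bullet> (q - p) = norm gp * (u \<bullet> v)" by (subst gpu) (simp add: v_def)
  ultimately have "norm gp * (u \<bullet> v) \<le> 0" by simp
  then have s1: "u \<bullet> v \<le> 0" using gp0 by (simp add: mult_le_0_iff)
  have "gq \<bullet> (p - q) \<le> 0" using support[OF qc q] Fp by (simp add: gq_def)
  moreover have "gq \<bullet> (p - q) = norm gq * (u \<bullet> (p - q))" by (subst gqu) simp
  ultimately have "norm gq * (u \<bullet> (p - q)) \<le> 0" by simp
  then have "u \<bullet> (p - q) \<le> 0" using gq0 by (simp add: mult_le_0_iff)
  then have uv: "u \<bullet> v = 0" using s1 by (simp add: v_def inner_diff_right)
  have onM: "F (p + t *\<^sub>R v) = 0" if t: "0 \<le> t" "t \<le> 1" for t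
  proof -
    define r where "r = p + t *\<^sub>R v"
    have "(1 - t) *\<^sub>R p + t *\<^sub>R q \<in> {x. F x \<le> 0}"
      using qc_facts(6)[OF qc] Fp Fq t unfolding convex_def by auto
    moreover have "(1 - t) *\<^sub>R p + t *\<^sub>R q = r" by (simp add: r_def v_def algebra_simps)
    ultimately have Fr: "F r \<le> 0" by simp
    show ?thesis
    proof (rule ccontr)
      assume "F (p + t *\<^sub>R v) \<noteq> 0"
      then have "F r < 0" using Fr by (simp add: r_def)
      then obtain d where d: "d > 0" "\<And>y. dist y r < d \<Longrightarrow> F y < 0"
        using cont_neg[OF qc_facts(3)[OF qc]] by blast
      have nu: "norm u = 1" using uu by (simp add: norm_eq_sqrt_inner)
      have "dist (r + (d/2) *\<^sub>R u) r < d" using d(1) nu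
        by (simp add: dist_norm)
      then have "F (r + (d/2) *\<^sub>R u) \<le> 0" using d(2) by force
      then have "gp \<bullet> (r + (d/2) *\<^sub>R u - p) \<le> 0" using support[OF qc p] by (simp add: gp_def)
      moreover have "gp \<bullet> (r + (d/2) *\<^sub>R u - p) = norm gp * (d/2)"
        by (subst gpu) (simp add: r_def inner_add_right uv uu)
      moreover have "norm gp * (d/2) > 0" using gp0 d(1) by simp
      ultimately show False by simp
    qed
  qed
  have perp: "grad F (p + t *\<^sub>R v) \<bullet> v = 0" if t: "0 \<le> t" "t < 1" for t
  proof (cases "t = 0")
    case True
    have "gp \<bullet> v = norm gp * (u \<bullet> v)" by (subst gpu) simp
    then show ?thesis using True uv by (simp add: gp_def)
  next
    case False
    define r where "r = p + t *\<^sub>R v"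
    have rM: "r \<in> hsurf F" using onM[of t] t by (simp add: hsurf_def r_def)
    have "grad F r \<bullet> (p - r) \<le> 0" using support[OF qc rM] Fp by simp
    then have a: "t * (grad F r \<bullet> v) \<ge> 0" by (simp add: r_def)
    have "grad F r \<bullet> (q - r) \<le> 0" using support[OF qc rM] Fq by simp
    moreover have "q - r = (1 - t) *\<^sub>R v" by (simp add: r_def v_def algebra_simps)
    ultimately have b: "(1 - t) * (grad F r \<bullet> v) \<le> 0" by simp
    have "grad F r \<bullet> v \<ge> 0" using a t False by (simp add: zero_le_mult_iff)
    moreover have "grad F r \<bullet> v \<le> 0" using b t by (simp add: mult_le_0_iff)
    ultimately show ?thesis by (simp add: r_def)
  qed
  have "v \<bullet> grad F p = 0" using perp[of 0] by (simp add: inner_commute)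
  then have hpos: "hess F p v \<bullet> v > 0" using qc_facts(9)[OF qc p] v0 by blast
  from DERIV_pos_inc_right[OF grad_line_deriv[OF qc_facts(2)[OF qc, of p]] hpos]
  obtain d where d: "d > 0" "\<And>h. h > 0 \<Longrightarrow> h < d \<Longrightarrow>
      grad F (p + 0 *\<^sub>R v) \<bullet> v < grad F (p + (0 + h) *\<^sub>R v) \<bullet> v"
    by blast
  define t where "t = min (d/2) (1/2)"
  have t: "t > 0" "t < d" "t < 1" using d(1) by (auto simp: t_def)
  have "grad F (p + 0 *\<^sub>R v) \<bullet> v < grad F (p + t *\<^sub>R v) \<bullet> v" using d(2)[OF t(1) t(2)] by simp
  then show False using perp[of 0] perp[of t] t by simp
qed

lemma J_props:
  assumes "complex_structure J"
  shows "\<And>c x. J (c *\<^sub>R x) = c *\<^sub>R J x" "\<And>x. J (- x) = - J x"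
    "\<And>u v. J u \<bullet> J v = u \<bullet> v" "\<And>u. J (J u) = - u" "\<And>x. norm (J x) = norm x"
proof -
  have lin: "linear J" using assms by (simp add: complex_structure_def)
  show "\<And>c x. J (c *\<^sub>R x) = c *\<^sub>R J x" using lin by (simp add: linear_scale)
  show "\<And>x. J (- x) = - J x" using lin by (simp add: linear_neg)
  show i: "\<And>u v. J u \<bullet> J v = u \<bullet> v" "\<And>u. J (J u) = - u"
    using assms by (auto simp: complex_structure_def)
  show "\<And>x. norm (J x) = norm x" using i(1) by (simp add: norm_eq_sqrt_inner)
qed

lemma reeb_eq:
  fixes F :: "'a::euclidean_space \<Rightarrow> real"
  assumes cs: "complex_structure J" and qc: "quad_convex_hypersurface F" and p: "p \<in> hsurf F"
  shows "reeb J F p = (1 / (grad F p \<bullet> p)) *\<^sub>R J (grad F p)"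
proof -
  define g where "g = grad F p"
  have g0: "g \<noteq> 0" using qc_facts(8)[OF qc p] by (simp add: g_def)
  have gp: "g \<bullet> p > 0" using inner_pos[OF qc p] by (simp add: g_def)
  note Jp = J_props[OF cs]
  define r0 where "r0 = (1 / (g \<bullet> p)) *\<^sub>R J g"
  have "(THE r. (\<forall>v\<in>tangent_space F p. omega J v r = 0) \<and> omega J p r = 1) = r0"
  proof (rule the_equality)
    show "(\<forall>v\<in>tangent_space F p. omega J v r0 = 0) \<and> omega J p r0 = 1"
      using gp by (auto simp: r0_def omega_def tangent_space_def Jp g_def[symmetric] inner_commute)
  next
    fix r assume r: "(\<forall>v\<in>tangent_space F p. omega J v r = 0) \<and> omega J p r = 1"
    define w where "w = - J r"
    have Jw: "J w = r" by (simp add: w_def Jp)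
    have "v \<bullet> w = 0" if "v \<bullet> g = 0" for v
    proof -
      have "omega J v r = 0" using r that by (auto simp: tangent_space_def g_def)
      then show ?thesis by (simp add: omega_def Jw[symmetric] Jp)
    qed
    then have wc: "w = (w \<bullet> g / (g \<bullet> g)) *\<^sub>R g" by (rule perp_parallel[OF g0])
    define c where "c = w \<bullet> g / (g \<bullet> g)"
    have "omega J p r = 1" using r by blast
    then have "p \<bullet> w = 1" by (simp add: omega_def Jw[symmetric] Jp)
    then have "c * (g \<bullet> p) = 1" using wc by (metis c_def inner_commute inner_scaleR_right)
    then have "c = 1 / (g \<bullet> p)" using gp by (simp add: field_simps)
    then show "r = r0" using wc Jw by (metis c_def Jp(1) r0_def)
  qed
  then show ?thesis by (simp add: reeb_def r0_def g_def)
qed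

lemma pos_sim_iff:
  fixes F :: "'a::euclidean_space \<Rightarrow> real"
  assumes cs: "complex_structure J" and qc: "quad_convex_hypersurface F" and p: "p \<in> hsurf F"
    and y: "y \<noteq> 0"
  shows "pos_sim (reeb J F p) y \<longleftrightarrow> gauss F p = - ((1 / norm y) *\<^sub>R J y)"
proof -
  define g where "g = grad F p"
  have g0: "g \<noteq> 0" using qc_facts(8)[OF qc p] by (simp add: g_def)
  have gp: "g \<bullet> p > 0" using inner_pos[OF qc p] by (simp add: g_def)
  define a where "a = 1 / (g \<bullet> p)"
  have a: "a > 0" using gp by (simp add: a_def)
  note Jp = J_props[OF cs]
  have R: "reeb J F p = a *\<^sub>R J g" using reeb_eq[OF cs qc p] by (simp add: a_def g_def)
  have ny: "norm y > 0" using y by simp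
  have ng: "norm g > 0" using g0 by simp
  show ?thesis
  proof
    assume "pos_sim (reeb J F p) y"
    then obtain c where c: "c > 0" "a *\<^sub>R J g = c *\<^sub>R y" by (auto simp: pos_sim_def R)
    then have "J (a *\<^sub>R J g) = J (c *\<^sub>R y)" by simp
    then have "- (a *\<^sub>R g) = c *\<^sub>R J y" by (simp add: Jp)
    then have e2: "a *\<^sub>R g = - (c *\<^sub>R J y)" by (metis minus_minus)
    have "g = (1 / a) *\<^sub>R (a *\<^sub>R g)" using a by simp
    also have "\<dots> = - ((c / a) *\<^sub>R J y)" by (simp add: e2)
    finally have gJ: "g = - ((c / a) *\<^sub>R J y)" .
    have "norm g = (c / a) * norm y" using gJ a c by (simp add: Jp)
    then show "gauss F p = - ((1 / norm y) *\<^sub>R J y)"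
      using gJ a c ny by (simp add: gauss_def g_def[symmetric])
  next
    assume "gauss F p = - ((1 / norm y) *\<^sub>R J y)"
    then have "(1 / norm g) *\<^sub>R g = - ((1 / norm y) *\<^sub>R J y)" by (simp add: gauss_def g_def)
    note e3 = this
    have "g = norm g *\<^sub>R ((1 / norm g) *\<^sub>R g)" using ng by simp
    also have "\<dots> = - ((norm g / norm y) *\<^sub>R J y)" by (simp add: e3)
    finally have "J g = J (- ((norm g / norm y) *\<^sub>R J y))" by simp
    then have "J g = (norm g / norm y) *\<^sub>R y" by (simp add: Jp)
    then have "reeb J F p = (a * (norm g / norm y)) *\<^sub>R y" by (simp add: R)
    moreover have "a * (norm g / norm y) > 0" using a ng ny by simp
    ultimately show "pos_sim (reeb J F p) y" by (auto simp: pos_sim_def)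
  qed
qed

lemma main_y:
  fixes F :: "'a::euclidean_space \<Rightarrow> real"
  assumes cs: "complex_structure J" and qc: "quad_convex_hypersurface F" and y: "y \<noteq> 0"
  shows "(\<exists>!p. p \<in> hsurf F \<and> pos_sim (reeb J F p) y)
    \<and> (THE p. p \<in> hsurf F \<and> pos_sim (reeb J F p) y)
        = the_inv_into (hsurf F) (gauss F) (- ((1 / norm y) *\<^sub>R J y))"
proof -
  define u where "u = - ((1 / norm y) *\<^sub>R J y)"
  have nu: "norm u = 1" using y by (simp add: u_def J_props(5)[OF cs])
  have eqv: "(p \<in> hsurf F \<and> pos_sim (reeb J F p) y) \<longleftrightarrow> (p \<in> hsurf F \<and> gauss F p = u)" for p
    using pos_sim_iff[OF cs qc _ y, of p] by (auto simp: u_def)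
  obtain q where q: "q \<in> hsurf F" "gauss F q = u" using gauss_surj[OF qc nu] by blast
  have inj: "inj_on (gauss F) (hsurf F)" by (rule gauss_inj[OF qc])
  have uq: "p = q" if "p \<in> hsurf F" "gauss F p = u" for p
    using inj q that unfolding inj_on_def by metis
  have "\<exists>!p. p \<in> hsurf F \<and> pos_sim (reeb J F p) y"
    using q uq eqv by blast
  moreover have "(THE p. p \<in> hsurf F \<and> pos_sim (reeb J F p) y) = q"
    using q uq eqv by (intro the_equality) blast+
  moreover have "the_inv_into (hsurf F) (gauss F) u = q"
    by (rule the_inv_into_f_eq[OF inj q(2) q(1)])
  ultimately show ?thesis by (simp add: u_def)
qed

theorem lemma2p4:
  fixes F :: "'a::euclidean_space \<Rightarrow> real" and J :: "'a \<Rightarrow> 'a" and x :: 'a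
  assumes "complex_structure J"
    and "quad_convex_hypersurface F"
    and "F x > 0"
  shows "(\<exists>!p. p \<in> hsurf F \<and> pos_sim (reeb J F p) (- x))
       \<and> (\<exists>!p. p \<in> hsurf F \<and> pos_sim (reeb J F p) x)
       \<and> (THE p. p \<in> hsurf F \<and> pos_sim (reeb J F p) x)
            = the_inv_into (hsurf F) (gauss F) (- ((1 / norm x) *\<^sub>R J x))
       \<and> (THE p. p \<in> hsurf F \<and> pos_sim (reeb J F p) (- x))
            = the_inv_into (hsurf F) (gauss F) ((1 / norm x) *\<^sub>R J x)"
proof -
  have x0: "x \<noteq> 0" using assms(3) qc_facts(7)[OF assms(2)] by auto
  have mx0: "- x \<noteq> 0" using x0 by simp
  note A = main_y[OF assms(1) assms(2) x0]
  note B = main_y[OF assms(1) assms(2) mx0]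
  have "- ((1 / norm (- x)) *\<^sub>R J (- x)) = (1 / norm x) *\<^sub>R J x"
    by (simp add: J_props(2)[OF assms(1)])
  then show ?thesis using A B by simp
qed

end
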